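(* Let $1\le p<\infty$. Let $(f_n)\subset L'^{\,p}$ with respective primitives $(F_n)\subset L^p$. Suppose there is a measurable function $F:\mathbb R\to\mathbb R$ such that $F_n\to F$ almost everywhere or in measure, and suppose there is $g\in L'^{\,p}$ such that $|f_n|\preceq g$ for all $n$. Then $F\in L^p$ (so $F'\in L'^{\,p}$) and $\lim_{n\to\infty}\|f_n-F'\|'_p=0$.
   Context: All function spaces are over $\mathbb R$ with Lebesgue measure. $L'^{\,p}=\{f\in\mathcal S' : f=F' \text{ (distributional derivative) for some } F\in L^p\}$; for $1\le p<\infty$ the $F\in L^p$ is unique and called the primitive of $f$; linear operations are defined through primitives and $\|f\|'_p:=\|F\|_p$. Order: $f\preceq g$ iff the primitives satisfy $F\le G$ a.e. For $f\in L'^{\,p}$ with primitive $F$, $|f|:=(|F|)'$ (the lattice absolute value). *)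

theory Defs
  imports "HOL-Analysis.Analysis"
begin

text \<open>Elements f of L'^p are represented by their (unique) primitives F in L^p
  (f = F'). All operations of L'^p are defined through primitives, so we define
  them directly on primitives.\<close>

definition Lp :: "real \<Rightarrow> (real \<Rightarrow> real) set" where
  "Lp p = {F. F \<in> borel_measurable lebesgue \<and> integrable lebesgue (\<lambda>x. \<bar>F x\<bar> powr p)}"

definition dnorm :: "real \<Rightarrow> (real \<Rightarrow> real) \<Rightarrow> real" where
  "dnorm p F = (\<integral>x. \<bar>F x\<bar> powr p \<partial>lebesgue) powr (1 / p)"

text \<open>Order on L'^p: f <= g iff primitives satisfy F <= G a.e.\<close>
definition dpreceq :: "(real \<Rightarrow> real) \<Rightarrow> (real \<Rightarrow> real) \<Rightarrow> bool" where
  "dpreceq F G \<longleftrightarrow> (AE x in lebesgue. F x \<le> G x)"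

text \<open>Lattice absolute value |f| := (|F|)' : primitive of |f| is |F|.\<close>
definition dabs :: "(real \<Rightarrow> real) \<Rightarrow> (real \<Rightarrow> real)" where
  "dabs F = (\<lambda>x. \<bar>F x\<bar>)"

definition dminus :: "(real \<Rightarrow> real) \<Rightarrow> (real \<Rightarrow> real) \<Rightarrow> (real \<Rightarrow> real)" where
  "dminus F G = (\<lambda>x. F x - G x)"

definition conv_in_measure :: "(nat \<Rightarrow> real \<Rightarrow> real) \<Rightarrow> (real \<Rightarrow> real) \<Rightarrow> bool" where
  "conv_in_measure Fs F \<longleftrightarrow>
     (\<forall>e>0. ((\<lambda>n. emeasure lebesgue {x. e < \<bar>Fs n x - F x\<bar>}) \<longlongrightarrow> 0) sequentially)"

end

theory Submission
  imports Defs
begin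

lemma min_lim:
  fixes W :: "real \<Rightarrow> real"
  assumes W: "integrable lebesgue W" and Wnn: "\<And>x. 0 \<le> W x"
  shows "(\<lambda>k. \<integral>x. min (W x) (1 / Suc k) \<partial>lebesgue) \<longlonglongrightarrow> 0"
proof -
  have Wm: "W \<in> borel_measurable lebesgue" using W by auto
  have "(\<lambda>k. \<integral>x. min (W x) (1 / Suc k) \<partial>lebesgue) \<longlonglongrightarrow> integral\<^sup>L lebesgue (\<lambda>x::real. 0::real)"
  proof (rule integral_dominated_convergence[where w=W and f="\<lambda>x. 0" and s="\<lambda>k x. min (W x) (1 / Suc k)"])
    show "AE x in lebesgue. (\<lambda>k. min (W x) (1 / Suc k)) \<longlonglongrightarrow> 0"
    proof (rule AE_I2)
      fix x
      have "(\<lambda>k. 1 / real (Suc k)) \<longlonglongrightarrow> 0" by (rule LIMSEQ_Suc[OF lim_1_over_n])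
      hence "(\<lambda>k. min (W x) (1 / real (Suc k))) \<longlonglongrightarrow> min (W x) 0"
        by (intro tendsto_min tendsto_const)
      thus "(\<lambda>k. min (W x) (1 / Suc k)) \<longlonglongrightarrow> 0" using Wnn[of x] by simp
    qed
    show "AE x in lebesgue. norm (min (W x) (1 / Suc k)) \<le> W x" for k
      using Wnn by auto
  qed (use Wm W in auto)
  thus ?thesis by simp
qed

lemma max_lim:
  fixes W :: "real \<Rightarrow> real"
  assumes W: "integrable lebesgue W" and Wnn: "\<And>x. 0 \<le> W x"
  shows "(\<lambda>k. \<integral>x. max (W x - real k) 0 \<partial>lebesgue) \<longlonglongrightarrow> 0"
proof -
  have Wm: "W \<in> borel_measurable lebesgue" using W by auto
  have "(\<lambda>k. \<integral>x. max (W x - real k) 0 \<partial>lebesgue) \<longlonglongrightarrow> integral\<^sup>L lebesgue (\<lambda>x::real. 0::real)"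
  proof (rule integral_dominated_convergence[where w=W and f="\<lambda>x. 0" and s="\<lambda>k x. max (W x - real k) 0"])
    show "AE x in lebesgue. (\<lambda>k. max (W x - real k) 0) \<longlonglongrightarrow> 0"
    proof (rule AE_I2)
      fix x
      obtain N :: nat where "W x < N" using reals_Archimedean2 by blast
      hence "\<forall>k\<ge>N. max (W x - real k) 0 = 0" by auto
      thus "(\<lambda>k. max (W x - real k) 0) \<longlonglongrightarrow> 0"
        by (intro tendsto_eventually) (auto simp: eventually_sequentially)
    qed
    show "AE x in lebesgue. norm (max (W x - real k) 0) \<le> W x" for k
      using Wnn by auto
  qed (use Wm W in auto)
  thus ?thesis by simp
qed


lemma lebesgue_Collect:
  "{x\<in>space lebesgue. P x} \<in> sets lebesgue \<Longrightarrow> {x. P x} \<in> sets (lebesgue :: 'a::euclidean_space measure)"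
  by simp

theorem mainTheorem10:
  fixes p :: real and Fs :: "nat \<Rightarrow> real \<Rightarrow> real" and F G :: "real \<Rightarrow> real"
  assumes p: "1 \<le> p"
    and Fs: "\<And>n. Fs n \<in> Lp p"
    and F: "F \<in> borel_measurable lebesgue"
    and conv: "(AE x in lebesgue. (\<lambda>n. Fs n x) \<longlonglongrightarrow> F x) \<or> conv_in_measure Fs F"
    and G: "G \<in> Lp p"
    and dom: "\<And>n. dpreceq (dabs (Fs n)) G"
  shows "F \<in> Lp p \<and> (\<lambda>n. dnorm p (dminus (Fs n) F)) \<longlonglongrightarrow> 0"
proof -
  have Fsm[measurable]: "Fs n \<in> borel_measurable lebesgue" for n using Fs[of n] by (simp add: Lp_def)
  have Gm[measurable]: "G \<in> borel_measurable lebesgue" using G by (simp add: Lp_def)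
  note F[measurable]
  have Gi: "integrable lebesgue (\<lambda>x. \<bar>G x\<bar> powr p)" using G by (simp add: Lp_def)
  have domn: "AE x in lebesgue. \<bar>Fs n x\<bar> \<le> G x" for n
    using dom[of n] by (simp add: dpreceq_def dabs_def)
  hence domall: "AE x in lebesgue. \<forall>n. \<bar>Fs n x\<bar> \<le> G x" by (simp add: AE_all_countable)
  have Fdom: "AE x in lebesgue. \<bar>F x\<bar> \<le> G x"
    using conv
  proof
    assume ae: "AE x in lebesgue. (\<lambda>n. Fs n x) \<longlonglongrightarrow> F x"
    show ?thesis using ae domall
    proof eventually_elim
      case (elim x)
      have "(\<lambda>n. \<bar>Fs n x\<bar>) \<longlonglongrightarrow> \<bar>F x\<bar>" using elim(1) by (rule tendsto_rabs)
      thus ?case using elim(2) by (intro LIMSEQ_le_const2) auto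
    qed
  next
    assume cm: "conv_in_measure Fs F"
    have "AE x in lebesgue. \<bar>F x\<bar> \<le> G x + 1 / Suc k" for k
    proof -
      define e :: real where "e = 1 / Suc k"
      have e: "e > 0" by (simp add: e_def)
      define B where "B = {x. G x + e < \<bar>F x\<bar>}"
      have Bm: "B \<in> sets lebesgue" unfolding B_def by (rule lebesgue_Collect) measurable
      define A where "A n = {x. e < \<bar>Fs n x - F x\<bar>}" for n
      have Am: "A n \<in> sets lebesgue" for n unfolding A_def by (rule lebesgue_Collect) measurable
      define N where "N n = {x. G x < \<bar>Fs n x\<bar>}" for n
      have Nm: "N n \<in> sets lebesgue" for n unfolding N_def by (rule lebesgue_Collect) measurable
      have Nnull: "emeasure lebesgue (N n) = 0" for n
      proof -
        have "AE x in lebesgue. x \<notin> N n" using domn[of n] by (auto simp: N_def)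
        thus ?thesis using Nm[of n] by (simp add: AE_iff_measurable[OF _ refl])
      qed
      have "emeasure lebesgue B \<le> emeasure lebesgue (A n)" for n
      proof -
        have "B \<subseteq> A n \<union> N n" by (auto simp: B_def A_def N_def)
        hence "emeasure lebesgue B \<le> emeasure lebesgue (A n \<union> N n)"
          using Am Nm by (intro emeasure_mono) auto
        also have "\<dots> \<le> emeasure lebesgue (A n) + emeasure lebesgue (N n)"
          using Am Nm by (intro emeasure_subadditive) auto
        finally show ?thesis using Nnull by simp
      qed
      moreover have "(\<lambda>n. emeasure lebesgue (A n)) \<longlonglongrightarrow> 0"
        using cm e unfolding conv_in_measure_def A_def by blast
      ultimately have "emeasure lebesgue B \<le> 0"
        by (intro tendsto_le[OF sequentially_bot, where f="\<lambda>n. emeasure lebesgue (A n)"]) auto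
      hence "emeasure lebesgue B = 0" by simp
      hence "AE x in lebesgue. x \<notin> B" using Bm by (intro AE_not_in) auto
      thus ?thesis by eventually_elim (auto simp: B_def e_def)
    qed
    hence "AE x in lebesgue. \<forall>k. \<bar>F x\<bar> \<le> G x + 1 / Suc k" by (simp add: AE_all_countable)
    thus ?thesis
    proof eventually_elim
      case (elim x)
      show ?case
      proof (rule field_le_epsilon)
        fix d :: real assume "0 < d"
        then obtain k where "1 / real (Suc k) < d" using reals_Archimedean[of d]
          by (metis inverse_eq_divide)
        thus "\<bar>F x\<bar> \<le> G x + d" using elim[rule_format, of k] by linarith
      qed
    qed
  qed
  have p0: "0 < p" using p by simp
  have FLp: "F \<in> Lp p"
    unfolding Lp_def
  proof (intro CollectI conjI F)
    show "integrable lebesgue (\<lambda>x. \<bar>F x\<bar> powr p)"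
    proof (rule Bochner_Integration.integrable_bound[OF Gi])
      show "(\<lambda>x. \<bar>F x\<bar> powr p) \<in> borel_measurable lebesgue" by measurable
      show "AE x in lebesgue. norm (\<bar>F x\<bar> powr p) \<le> norm (\<bar>G x\<bar> powr p)"
        using Fdom by eventually_elim (auto intro!: powr_mono2 simp: p0 less_imp_le)
    qed
  qed
  define W where "W x = (2 * \<bar>G x\<bar>) powr p" for x
  have Wnn: "0 \<le> W x" for x by (simp add: W_def)
  have Wi: "integrable lebesgue W"
  proof -
    have "W = (\<lambda>x. 2 powr p * \<bar>G x\<bar> powr p)" by (auto simp: W_def powr_mult)
    thus ?thesis using Gi by simp
  qed
  have Wm[measurable]: "W \<in> borel_measurable lebesgue" using Wi by auto
  define D where "D n x = \<bar>Fs n x - F x\<bar> powr p" for n x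
  have Dm[measurable]: "D n \<in> borel_measurable lebesgue" for n unfolding D_def by measurable
  have Dnn: "0 \<le> D n x" for n x by (simp add: D_def)
  have Dbound: "AE x in lebesgue. D n x \<le> W x" for n
    using Fdom domn[of n]
  proof eventually_elim
    case (elim x)
    have "\<bar>Fs n x - F x\<bar> \<le> 2 * \<bar>G x\<bar>" using elim by linarith
    thus ?case unfolding D_def W_def by (intro powr_mono2) (auto simp: p0 less_imp_le)
  qed
  have Di: "integrable lebesgue (D n)" for n
    by (rule Bochner_Integration.integrable_bound[OF Wi Dm]) (use Dbound[of n] Dnn Wnn in auto)
  have intlim: "(\<lambda>n. \<integral>x. D n x \<partial>lebesgue) \<longlonglongrightarrow> 0"
    using conv
  proof
    assume ae: "AE x in lebesgue. (\<lambda>n. Fs n x) \<longlonglongrightarrow> F x"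
    have "(\<lambda>n. integral\<^sup>L lebesgue (D n)) \<longlonglongrightarrow> integral\<^sup>L lebesgue (\<lambda>x::real. 0::real)"
    proof (rule integral_dominated_convergence[where w=W and f="\<lambda>x. 0::real" and s=D])
      show "AE x in lebesgue. (\<lambda>n. D n x) \<longlonglongrightarrow> 0"
        using ae
      proof eventually_elim
        case (elim x)
        have "(\<lambda>n. Fs n x - F x) \<longlonglongrightarrow> 0" using elim by (simp add: LIM_zero)
        hence "(\<lambda>n. \<bar>Fs n x - F x\<bar>) \<longlonglongrightarrow> 0" using tendsto_rabs_zero by blast
        thus ?case unfolding D_def
          by (intro tendsto_zero_powrI[where b=p]) (auto simp: p0)
      qed
      show "AE x in lebesgue. norm (D n x) \<le> W x" for n
        using Dbound[of n] by eventually_elim (simp add: Dnn)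
    qed (use Wi in auto)
    thus ?thesis by simp
  next
    assume cm: "conv_in_measure Fs F"
    show ?thesis
    proof (rule LIMSEQ_I)
      fix r :: real assume r: "0 < r"
      obtain k1 where k1: "\<bar>\<integral>x. min (W x) (1 / Suc k1) \<partial>lebesgue\<bar> < r / 3"
        using LIMSEQ_D[OF min_lim[OF Wi Wnn], of "r/3"] r by auto
      obtain k2 where k2: "\<bar>\<integral>x. max (W x - real k2) 0 \<partial>lebesgue\<bar> < r / 3"
        using LIMSEQ_D[OF max_lim[OF Wi Wnn], of "r/3"] r by auto
      define c :: real where "c = 1 / Suc k1"
      have c: "0 < c" by (simp add: c_def)
      define d where "d = c powr (1 / p)"
      have d: "0 < d" using c by (simp add: d_def)
      have dp: "d powr p = c" using c p0 by (simp add: d_def powr_powr)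
      define M :: real where "M = real k2"
      have M: "0 \<le> M" by (simp add: M_def)
      define A where "A n = {x. d < \<bar>Fs n x - F x\<bar>}" for n
      have Am[measurable]: "A n \<in> sets lebesgue" for n unfolding A_def by (rule lebesgue_Collect) measurable
      have "(\<lambda>n. emeasure lebesgue (A n)) \<longlonglongrightarrow> 0"
        using cm d unfolding conv_in_measure_def A_def by blast
      moreover have "(0::ennreal) < ennreal (r / (3 * (M + 1)))" using r M by simp
      ultimately have "eventually (\<lambda>n. emeasure lebesgue (A n) < ennreal (r / (3 * (M + 1)))) sequentially"
        by (rule order_tendstoD)
      then obtain N where N: "\<And>n. n \<ge> N \<Longrightarrow> emeasure lebesgue (A n) < ennreal (r / (3 * (M + 1)))"
        by (auto simp: eventually_sequentially)
      show "\<exists>no. \<forall>n\<ge>no. norm ((\<integral>x. D n x \<partial>lebesgue) - 0) < r"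
      proof (intro exI allI impI)
        fix n assume n: "n \<ge> N"
        have fin: "emeasure lebesgue (A n) < \<infinity>" using N[OF n] by (auto simp: less_le_trans intro: order.strict_trans)
        have mA: "measure lebesgue (A n) < r / (3 * (M + 1))"
        proof -
          have "emeasure lebesgue (A n) = ennreal (measure lebesgue (A n))"
            using fin by (intro emeasure_eq_ennreal_measure) auto
          thus ?thesis using N[OF n] r M by (simp add: ennreal_less_iff)
        qed
        define m1 where "m1 x = min (W x) c" for x
        define m2 where "m2 x = max (W x - M) 0" for x
        have [measurable]: "m1 \<in> borel_measurable lebesgue" "m2 \<in> borel_measurable lebesgue"
          unfolding m1_def[abs_def] m2_def[abs_def] by measurable measurable
        have i1: "integrable lebesgue m1"
          by (rule Bochner_Integration.integrable_bound[OF Wi]) (auto simp: m1_def Wnn c less_imp_le)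
        have i2: "integrable lebesgue m2"
          by (rule Bochner_Integration.integrable_bound[OF Wi]) (auto simp: m2_def Wnn M)
        have i3: "integrable lebesgue (\<lambda>x. M * indicator (A n) x)"
          using fin by (intro integrable_mult_right integrable_real_indicator) auto
        have "(\<integral>x. D n x \<partial>lebesgue) \<le> (\<integral>x. m1 x + m2 x + M * indicator (A n) x \<partial>lebesgue)"
        proof (rule integral_mono_AE[OF Di])
          show "integrable lebesgue (\<lambda>x. m1 x + m2 x + M * indicator (A n) x)"
            using i1 i2 i3 by auto
          show "AE x in lebesgue. D n x \<le> m1 x + m2 x + M * indicator (A n) x"
            using Dbound[of n]
          proof eventually_elim
            case (elim x)
            have m1nn: "0 \<le> m1 x" "0 \<le> m2 x" using Wnn[of x] c M by (auto simp: m1_def m2_def)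
            show ?case
            proof (cases "x \<in> A n")
              case True
              have "W x \<le> m2 x + M" by (simp add: m2_def)
              thus ?thesis using True elim m1nn by simp
            next
              case False
              hence "\<bar>Fs n x - F x\<bar> \<le> d" by (simp add: A_def)
              hence "D n x \<le> d powr p" unfolding D_def by (intro powr_mono2) (auto simp: p0 less_imp_le)
              hence "D n x \<le> m1 x" using elim dp by (simp add: m1_def)
              thus ?thesis using False m1nn by simp
            qed
          qed
        qed
        also have "\<dots> = (\<integral>x. m1 x \<partial>lebesgue) + (\<integral>x. m2 x \<partial>lebesgue) + M * measure lebesgue (A n)"
          using i1 i2 i3 by simp
        also have "\<dots> < r / 3 + r / 3 + r / 3"
        proof -
          have "(\<integral>x. m1 x \<partial>lebesgue) < r / 3" using k1 by (simp add: m1_def c_def)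
          moreover have "(\<integral>x. m2 x \<partial>lebesgue) < r / 3" using k2 by (simp add: m2_def M_def)
          moreover have "M * measure lebesgue (A n) \<le> M * (r / (3 * (M + 1)))"
            using mA M by (intro mult_left_mono) auto
          moreover have "M * (r / (3 * (M + 1))) < r / 3"
            using M r by (simp add: field_simps)
          ultimately show ?thesis by linarith
        qed
        finally have "(\<integral>x. D n x \<partial>lebesgue) < r" by simp
        moreover have "0 \<le> (\<integral>x. D n x \<partial>lebesgue)" using Dnn by simp
        ultimately show "norm ((\<integral>x. D n x \<partial>lebesgue) - 0) < r" by simp
      qed
    qed
  qed
  have "(\<lambda>n. (\<integral>x. D n x \<partial>lebesgue) powr (1 / p)) \<longlonglongrightarrow> 0"
    by (rule tendsto_zero_powrI[OF intlim tendsto_const]) (auto simp: Dnn p0)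
  hence "(\<lambda>n. dnorm p (dminus (Fs n) F)) \<longlonglongrightarrow> 0"
    by (simp add: dnorm_def dminus_def D_def)
  with FLp show ?thesis by blast
qed

end
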